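(* Let $f(t)=\sum_{n=1}^N A_n(t)e^{2\pi i n\xi_0 t}\in\mathcal{T}$ and suppose there are constants $C_n>0$ ($n=1,\dots,N$) and $s>1$ with $|A_n'(t)|\le C_n(1+|t|^s)^{-1}$ for all $t\in\mathbb{R}$. Let $\tau:\mathbb{R}\to\mathbb{R}$ be measurable with $\|\tau\|_\infty<1$, and define $\mathfrak{F}_{A_\tau}(f)(t)=\sum_{n=1}^N A_n(t+\tau(t))e^{2\pi i n\xi_0 t}$. Then $$\|f-\mathfrak{F}_{A_\tau}(f)\|_2\le D\,\|\tau\|_\infty\sum_{n=1}^N C_n,$$ where $D>0$ is given by $D^2=2+\frac{1}{1-\|\tau\|_\infty}\big\|(1+|x|^s)^{-1}\big\|_{L^2(\mathbb{R})}^2$ (so $D$ depends only on $\|\tau\|_\infty$ and $s$).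
   Context: $\mathcal{T}=\{\sum_{n=1}^N A_n(t)e^{2\pi i n\xi_0 t} : A_n\in\mathcal{C}_c^\infty(\mathbb{R}),\ A_n\ge0,\ \|A_n\|_\infty\le 1/n\}$, with fixed fundamental frequency $\xi_0>0$ and $N\in\mathbb{N}$. *)

theory Defs
  imports "HOL-Analysis.Analysis"
begin

definition smooth_real :: "(real \<Rightarrow> real) \<Rightarrow> bool" where
  "smooth_real f \<longleftrightarrow>
     (\<forall>k t. ((deriv ^^ k) f has_real_derivative (deriv ^^ Suc k) f t) (at t))"

definition Cc_inf :: "(real \<Rightarrow> real) \<Rightarrow> bool" where
  "Cc_inf f \<longleftrightarrow> smooth_real f \<and> compact (closure {t. f t \<noteq> 0})"

definition Linf_norm :: "(real \<Rightarrow> real) \<Rightarrow> real" where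
  "Linf_norm g = Inf {c. 0 \<le> c \<and> (AE x in lborel. \<bar>g x\<bar> \<le> c)}"

definition L2_norm_R :: "(real \<Rightarrow> 'a::real_normed_vector) \<Rightarrow> real" where
  "L2_norm_R g = sqrt (integral\<^sup>L lborel (\<lambda>x. (norm (g x))\<^sup>2))"

end

theory Submission
  imports Defs "HOL-Probability.Sinc_Integral"
begin

lemma pt_bound:
  fixes A A' :: "real \<Rightarrow> real" and C d \<delta> s t :: real
  assumes der: "\<And>u. (A has_real_derivative A' u) (at u)"
    and bd: "\<And>u. \<bar>A' u\<bar> \<le> C / (1 + \<bar>u\<bar> powr s)"
    and d: "\<bar>d\<bar> \<le> \<delta>" and dl: "\<delta> < 1" and s: "s > 0"
  shows "\<bar>A t - A (t + d)\<bar> \<le> C * \<bar>d\<bar> * (if \<bar>t\<bar> < 1 then 1 else 1 / (1 + \<bar>(1 - \<delta>) * t\<bar> powr s))"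
proof -
  define v where "v = (if \<bar>t\<bar> < 1 then 1 else 1 / (1 + \<bar>(1 - \<delta>) * t\<bar> powr s))"
  have "\<bar>A' 0\<bar> \<le> C" using bd[of 0] by simp
  hence C0: "C \<ge> 0" by linarith
  have vb: "\<bar>A' u\<bar> \<le> C * v" if u: "u \<in> cball t \<bar>d\<bar>" for u
  proof -
    have "1 / (1 + \<bar>u\<bar> powr s) \<le> v"
    proof (cases "\<bar>t\<bar> < 1")
      case True
      then show ?thesis unfolding v_def by (simp add: add_pos_nonneg)
    next
      case False
      have "\<bar>u - t\<bar> \<le> \<delta>" using u d by (auto simp: dist_real_def)
      moreover have "\<delta> \<le> \<delta> * \<bar>t\<bar>" using False d
        by (metis abs_ge_zero mult.right_neutral mult_left_mono not_less order_trans)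
      moreover have "\<bar>(1 - \<delta>) * t\<bar> = (1 - \<delta>) * \<bar>t\<bar>" using dl by (simp add: abs_mult)
      moreover have "\<bar>t\<bar> - \<bar>u - t\<bar> \<le> \<bar>u\<bar>" by linarith
      ultimately have "\<bar>(1 - \<delta>) * t\<bar> \<le> \<bar>u\<bar>" by (simp add: algebra_simps)
      hence "\<bar>(1 - \<delta>) * t\<bar> powr s \<le> \<bar>u\<bar> powr s" using s by (simp add: powr_mono2)
      then show ?thesis unfolding v_def using False
        by (simp add: frac_le add_pos_nonneg)
    qed
    then have "C / (1 + \<bar>u\<bar> powr s) \<le> C * v" using C0
      by (metis mult_left_mono times_divide_eq_right mult_1_right)
    then show ?thesis using bd[of u] by linarith
  qed
  have "norm (A t - A (t + d)) \<le> (C * v) * norm (t - (t + d))"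
    by (rule field_differentiable_bound[where S="cball t \<bar>d\<bar>" and f'=A'])
       (auto intro: has_field_derivative_at_within der vb simp: dist_real_def)
  then show ?thesis unfolding v_def by (simp add: mult_ac)
qed
lemma Linf_props:
  assumes "\<exists>c. AE x in lborel. \<bar>g x\<bar> \<le> c"
  shows "0 \<le> Linf_norm g" "AE x in lborel. \<bar>g x\<bar> \<le> Linf_norm g"
proof -
  define S where "S = {c. 0 \<le> c \<and> (AE x in lborel. \<bar>g x\<bar> \<le> c)}"
  obtain c where c: "AE x in lborel. \<bar>g x\<bar> \<le> c" using assms by blast
  have "max c 0 \<in> S" unfolding S_def using c by (auto elim!: eventually_mono)
  hence ne: "S \<noteq> {}" by blast
  have bdd: "bdd_below S" unfolding S_def by (auto intro: bdd_belowI[of _ 0])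
  show "0 \<le> Linf_norm g" unfolding Linf_norm_def S_def[symmetric]
    using ne by (intro cInf_greatest) (auto simp: S_def)
  have "AE x in lborel. \<bar>g x\<bar> \<le> Linf_norm g + 1 / (real n + 1)" for n
  proof -
    have "Inf S < Linf_norm g + 1 / (real n + 1)" unfolding Linf_norm_def S_def
      by (simp add: add_pos_pos)
    then obtain c where "c \<in> S" "c < Linf_norm g + 1 / (real n + 1)"
      using cInf_lessD[OF ne] by blast
    then show ?thesis unfolding S_def by (auto elim!: eventually_mono)
  qed
  hence "AE x in lborel. \<forall>n. \<bar>g x\<bar> \<le> Linf_norm g + 1 / (real n + 1)"
    by (simp add: AE_all_countable)
  then show "AE x in lborel. \<bar>g x\<bar> \<le> Linf_norm g"
  proof (rule eventually_mono)
    fix x assume H: "\<forall>n. \<bar>g x\<bar> \<le> Linf_norm g + 1 / (real n + 1)"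
    show "\<bar>g x\<bar> \<le> Linf_norm g"
    proof (rule field_le_epsilon)
      fix e :: real assume "e > 0"
      then obtain n where "1 / (real n + 1) < e"
        by (metis add.commute nat_approx_posE of_nat_Suc)
      then show "\<bar>g x\<bar> \<le> Linf_norm g + e" using H[rule_format, of n] by linarith
    qed
  qed
qed

lemma inv_sq_int: "integrable lborel (\<lambda>x::real. inverse (1 + x^2))"
  using integrable_inverse_1_plus_square by (simp add: set_integrable_def)

lemma w_int:
  assumes s: "s > 1"
  shows "integrable lborel (\<lambda>x::real. (1 / (1 + \<bar>x\<bar> powr s))\<^sup>2)"
proof -
  have I2: "integrable lborel (\<lambda>x::real. 2 * inverse (1 + x^2))" using inv_sq_int by simp
  have B:  "(1 / (1 + \<bar>x\<bar> powr s))\<^sup>2 \<le> 2 * inverse (1 + x^2)" for x :: real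
  proof -
    have "(1 + x^2) \<le> 2 * (1 + \<bar>x\<bar> powr s)\<^sup>2"
    proof (cases "\<bar>x\<bar> \<le> 1")
      case True
      then have "x^2 \<le> 1" by (simp add: abs_square_le_1)
      moreover have "1 \<le> (1 + \<bar>x\<bar> powr s)\<^sup>2" by (simp add: one_le_power)
      ultimately show ?thesis by linarith
    next
      case False
      then have "\<bar>x\<bar> \<le> \<bar>x\<bar> powr s" using s powr_mono[of 1 s "\<bar>x\<bar>"] by simp
      then have "\<bar>x\<bar> \<le> 1 + \<bar>x\<bar> powr s" by linarith
      then have "\<bar>x\<bar>^2 \<le> (1 + \<bar>x\<bar> powr s)\<^sup>2" by (rule power_mono) simp
      then have "x^2 \<le> (1 + \<bar>x\<bar> powr s)\<^sup>2" by simp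
      moreover have "1 \<le> (1 + \<bar>x\<bar> powr s)\<^sup>2" by (simp add: one_le_power)
      ultimately show ?thesis by linarith
    qed
    moreover have "(1 + \<bar>x\<bar> powr s)\<^sup>2 > 0" using powr_ge_zero[of "\<bar>x\<bar>" s] by (intro zero_less_power) linarith
    moreover have "(1::real) + x^2 > 0" by (simp add: add_pos_nonneg)
    ultimately show ?thesis
      by (simp add: power_divide divide_simps)
  qed
  show ?thesis
  proof (rule Bochner_Integration.integrable_bound[OF I2])
    show "(\<lambda>x::real. (1 / (1 + \<bar>x\<bar> powr s))\<^sup>2) \<in> borel_measurable lborel" by measurable
    show "AE x in lborel. norm ((1 / (1 + \<bar>x\<bar> powr s))\<^sup>2) \<le> norm (2 * inverse (1 + x^2))"
    proof (rule AE_I2)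
      fix x :: real
      have "0 \<le> 2 * inverse (1 + x^2)" by (simp add: add_pos_nonneg less_imp_le)
      then show "norm ((1 / (1 + \<bar>x\<bar> powr s))\<^sup>2) \<le> norm (2 * inverse (1 + x^2))"
        using B[of x] by simp
    qed
  qed
qed
theorem lemma1:
  fixes N :: nat and \<xi>0 s :: real
    and A :: "nat \<Rightarrow> real \<Rightarrow> real" and C :: "nat \<Rightarrow> real"
    and \<tau> :: "real \<Rightarrow> real"
  assumes xi0: "\<xi>0 > 0"
    and A_Cc: "\<And>n. n \<in> {1..N} \<Longrightarrow> Cc_inf (A n)"
    and A_nonneg: "\<And>n t. n \<in> {1..N} \<Longrightarrow> A n t \<ge> 0"
    and A_bound: "\<And>n t. n \<in> {1..N} \<Longrightarrow> \<bar>A n t\<bar> \<le> 1 / real n"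
    and C_pos: "\<And>n. n \<in> {1..N} \<Longrightarrow> C n > 0"
    and s_gt: "s > 1"
    and A_deriv: "\<And>n t. n \<in> {1..N} \<Longrightarrow> \<bar>deriv (A n) t\<bar> \<le> C n / (1 + \<bar>t\<bar> powr s)"
    and \<tau>_meas: "\<tau> \<in> borel_measurable lborel"
    and \<tau>_ess_bdd: "\<exists>c. AE x in lborel. \<bar>\<tau> x\<bar> \<le> c"
    and \<tau>_small: "Linf_norm \<tau> < 1"
  shows
    "let f = (\<lambda>t. \<Sum>n=1..N. complex_of_real (A n t) * exp (2 * complex_of_real pi * \<i> * of_nat n * complex_of_real \<xi>0 * complex_of_real t));
         Ff = (\<lambda>t. \<Sum>n=1..N. complex_of_real (A n (t + \<tau> t)) * exp (2 * complex_of_real pi * \<i> * of_nat n * complex_of_real \<xi>0 * complex_of_real t));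
         D = sqrt (2 + (1 / (1 - Linf_norm \<tau>)) * (L2_norm_R (\<lambda>x::real. 1 / (1 + \<bar>x\<bar> powr s)))\<^sup>2)
     in L2_norm_R (\<lambda>t. f t - Ff t) \<le> D * Linf_norm \<tau> * (\<Sum>n=1..N. C n)"
  proof -
  define \<delta> where "\<delta> = Linf_norm \<tau>"
  define K where "K = 1 - \<delta>"
  define w where "w = (\<lambda>x::real. 1 / (1 + \<bar>x\<bar> powr s))"
  define v where "v = (\<lambda>t::real. if \<bar>t\<bar> < 1 then 1 else w (K * t))"
  define h2 where "h2 = (\<lambda>t::real. indicator {-1<..<1} t + (w (K * t))\<^sup>2)"
  define W where "W = integral\<^sup>L lborel (\<lambda>x. (w x)\<^sup>2)"
  define SC where "SC = (\<Sum>n=1..N. C n)"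
  have d0: "0 \<le> \<delta>" and tauAE: "AE x in lborel. \<bar>\<tau> x\<bar> \<le> \<delta>"
    using Linf_props[OF \<tau>_ess_bdd] unfolding \<delta>_def by auto
  have K0: "K > 0" using \<tau>_small unfolding K_def \<delta>_def by simp
  have SC0: "SC \<ge> 0" unfolding SC_def using C_pos by (intro sum_nonneg) (simp add: less_imp_le)
  have wint: "integrable lborel (\<lambda>x. (w x)\<^sup>2)" unfolding w_def using w_int[OF s_gt] .
  have W0: "W \<ge> 0" unfolding W_def by simp
  have wKint: "integrable lborel (\<lambda>x. (w (0 + K * x))\<^sup>2)"
    using lborel_integrable_real_affine[OF wint, of K 0] K0 by simp
  have wKeq: "W = K * integral\<^sup>L lborel (\<lambda>x. (w (0 + K * x))\<^sup>2)"
    unfolding W_def using lborel_integral_real_affine[of K "\<lambda>x. (w x)\<^sup>2" 0] K0 by simp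
  have indint: "integrable lborel (indicator {-1<..<1::real} :: real \<Rightarrow> real)"
    by (intro integrable_real_indicator) auto
  have indeq: "integral\<^sup>L lborel (indicator {-1<..<1::real} :: real \<Rightarrow> real) = 2"
    by simp
  have h2int: "integrable lborel h2" unfolding h2_def using indint wKint by simp
  have h2eq: "integral\<^sup>L lborel h2 = 2 + W / K"
    unfolding h2_def using indint wKint indeq wKeq K0 by (simp add: Bochner_Integration.integral_add)
  have vh2: "(v t)\<^sup>2 \<le> h2 t" for t
    unfolding v_def h2_def by (auto simp: indicator_def)
  have v0: "v t \<ge> 0" for t unfolding v_def w_def by (simp add: add_pos_nonneg)
  have derA: "(A n has_real_derivative deriv (A n) u) (at u)" if "n \<in> {1..N}" for n u
    using A_Cc[OF that] unfolding Cc_inf_def smooth_real_def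
    by (metis funpow_0 funpow_Suc_right o_apply)
  have contA: "continuous_on UNIV (A n)" if "n \<in> {1..N}" for n
    using derA[OF that] by (meson DERIV_isCont continuous_at_imp_continuous_on)
  define E where "E = (\<lambda>n t. exp (2 * complex_of_real pi * \<i> * of_nat n * complex_of_real \<xi>0 * complex_of_real t))"
  have nE: "norm (E n t) = 1" for n t
  proof -
    have "2 * complex_of_real pi * \<i> * of_nat n * complex_of_real \<xi>0 * complex_of_real t
          = \<i> * complex_of_real (2 * pi * real n * \<xi>0 * t)" by (simp add: mult_ac)
    then show ?thesis unfolding E_def by (simp only: norm_exp_i_times)
  qed
  define g where "g = (\<lambda>t. (\<Sum>n=1..N. complex_of_real (A n t) * E n t) - (\<Sum>n=1..N. complex_of_real (A n (t + \<tau> t)) * E n t))"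
  have gmeas: "g \<in> borel_measurable lborel"
  proof -
    have mA: "A n \<in> borel_measurable borel" if "n \<in> {1..N}" for n
      using contA[OF that] by (rule borel_measurable_continuous_onI)
    have mA': "A n \<in> borel_measurable lborel" if "n \<in> {1..N}" for n
      using mA[OF that] by simp
    have mAt: "(\<lambda>t. A n (t + \<tau> t)) \<in> borel_measurable lborel" if "n \<in> {1..N}" for n
    proof -
      have "(\<lambda>t. t + \<tau> t) \<in> lborel \<rightarrow>\<^sub>M borel" using \<tau>_meas by measurable
      from measurable_compose[OF this mA[OF that]] show ?thesis by (simp add: o_def)
    qed
    have mE: "E n \<in> borel_measurable lborel" for n unfolding E_def by measurable
    have c1: "(\<lambda>x. complex_of_real (A n x)) \<in> borel_measurable lborel" if "n \<in> {1..N}" for n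
      using mA'[OF that] by (rule measurable_compose[OF _ borel_measurable_of_real])
    have c2: "(\<lambda>x. complex_of_real (A n (x + \<tau> x))) \<in> borel_measurable lborel" if "n \<in> {1..N}" for n
      using mAt[OF that] by (rule measurable_compose[OF _ borel_measurable_of_real])
    show ?thesis unfolding g_def
      by (intro borel_measurable_diff borel_measurable_sum borel_measurable_times
            c1 c2 mE) auto
  qed
  have ptw: "AE t in lborel. (norm (g t))\<^sup>2 \<le> (\<delta> * SC)\<^sup>2 * h2 t"
    using tauAE
  proof (rule eventually_mono)
    fix t assume tt: "\<bar>\<tau> t\<bar> \<le> \<delta>"
    have "norm (g t) = norm (\<Sum>n=1..N. complex_of_real (A n t - A n (t + \<tau> t)) * E n t)"
      unfolding g_def by (simp add: sum_subtractf[symmetric] algebra_simps)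
    also have "\<dots> \<le> (\<Sum>n=1..N. norm (complex_of_real (A n t - A n (t + \<tau> t)) * E n t))"
      by (rule norm_sum)
    also have "\<dots> = (\<Sum>n=1..N. \<bar>A n t - A n (t + \<tau> t)\<bar>)"
      by (simp add: norm_mult nE flip: of_real_diff)
    also have "\<dots> \<le> (\<Sum>n=1..N. C n * \<delta> * v t)"
    proof (rule sum_mono)
      fix n assume n: "n \<in> {1..N}"
      have "\<bar>A n t - A n (t + \<tau> t)\<bar> \<le> C n * \<bar>\<tau> t\<bar> * v t"
        unfolding v_def w_def K_def
        using pt_bound[OF derA[OF n] A_deriv[OF n] tt] \<tau>_small s_gt unfolding \<delta>_def by simp
      also have "\<dots> \<le> C n * \<delta> * v t"
        using C_pos[OF n] v0[of t] tt by (intro mult_right_mono mult_left_mono) auto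
      finally show "\<bar>A n t - A n (t + \<tau> t)\<bar> \<le> C n * \<delta> * v t" .
    qed
    also have "\<dots> = \<delta> * SC * v t" unfolding SC_def by (simp add: sum_distrib_left sum_distrib_right mult_ac)
    finally have "norm (g t) \<le> \<delta> * SC * v t" .
    then have "(norm (g t))\<^sup>2 \<le> (\<delta> * SC * v t)\<^sup>2" by (simp add: power_mono)
    also have "\<dots> = (\<delta> * SC)\<^sup>2 * (v t)\<^sup>2" by (simp add: power_mult_distrib)
    also have "\<dots> \<le> (\<delta> * SC)\<^sup>2 * h2 t" by (intro mult_left_mono vh2) simp
    finally show "(norm (g t))\<^sup>2 \<le> (\<delta> * SC)\<^sup>2 * h2 t" .
  qed
  have Bint: "integrable lborel (\<lambda>t. (\<delta> * SC)\<^sup>2 * h2 t)" using h2int by simp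
  have gint: "integrable lborel (\<lambda>t. (norm (g t))\<^sup>2)"
  proof (rule Bochner_Integration.integrable_bound[OF Bint])
    show "(\<lambda>t. (norm (g t))\<^sup>2) \<in> borel_measurable lborel" using gmeas by measurable
    show "AE x in lborel. norm ((norm (g x))\<^sup>2) \<le> norm ((\<delta> * SC)\<^sup>2 * h2 x)"
      using ptw by (rule eventually_mono) (auto simp: h2_def)
  qed
  have "integral\<^sup>L lborel (\<lambda>t. (norm (g t))\<^sup>2) \<le> integral\<^sup>L lborel (\<lambda>t. (\<delta> * SC)\<^sup>2 * h2 t)"
    by (rule integral_mono_AE[OF gint Bint ptw])
  also have "\<dots> = (\<delta> * SC)\<^sup>2 * (2 + W / K)" using h2eq by simp
  finally have I: "integral\<^sup>L lborel (\<lambda>t. (norm (g t))\<^sup>2) \<le> (\<delta> * SC)\<^sup>2 * (2 + W / K)" .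
  have L2w: "(L2_norm_R w)\<^sup>2 = W" unfolding L2_norm_R_def W_def by simp
  have "L2_norm_R g \<le> sqrt ((\<delta> * SC)\<^sup>2 * (2 + W / K))"
    unfolding L2_norm_R_def using I by simp
  also have "\<dots> = sqrt (2 + 1 / K * W) * \<delta> * SC"
    using d0 SC0 by (simp add: real_sqrt_mult)
  finally have fin: "L2_norm_R g \<le> sqrt (2 + 1 / K * W) * \<delta> * SC" .
  have "L2_norm_R g \<le> sqrt (2 + 1 / K * (L2_norm_R w)\<^sup>2) * \<delta> * SC"
    using fin by (simp only: L2w)
  then show ?thesis unfolding Let_def g_def E_def K_def \<delta>_def SC_def w_def .
qed
end
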